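(* Suppose $\mathcal M$ is unichain. For every policy $\pi\subseteq\mathcal S$ and state $s\in\mathcal S$, the function $\lambda\mapsto\alpha^\pi_s(\lambda)$ (activation advantage of $s$ under $\pi$ in $\mathcal M(\lambda)$) is affine, and the absolute value of its slope is at most $2D(P^\pi)+1$.
   Context: Setting. An MDP is $\mathcal M=(\mathcal S,\{0,1\},(P^a)_a,(r^a)_a)$, finite $\mathcal S$, row-stochastic $P^0,P^1$, rewards $r^0,r^1\in\mathbb R^{\mathcal S}$. A policy is a subset $\pi\subseteq\mathcal S$ of states where action 1 is played, inducing $P^\pi$, $r^\pi$; $\mathcal M$ is unichain if every $P^\pi$ has a single recurrent class. For $\lambda\in\mathbb R$, $\mathcal M(\lambda)$ has the same transitions and rewards $r^1-\lambda\mathbf 1$ (action 1), $r^0$ (action 0). For a unichain policy, bias $b^\pi(\lambda)$ (up to additive constant) solves $g^\pi\mathbf 1+b^\pi=r^\pi+P^\pi b^\pi$ in $\mathcal M(\lambda)$; activation advantage $\alpha^\pi_s(\lambda)=r^1_s-\lambda-r^0_s+(P^1_{s,\cdot}-P^0_{s,\cdot})\cdot b^\pi(\lambda)$. Diameter of unichain $P$ with recurrent class $\mathcal S_r$: $D(P)=\max_{s\in\mathcal S,s'\in\mathcal S_r}\mathbb E^P[\tau_{s,s'}]$, $\tau_{s,s'}$ the number of steps to reach $s'$ from $s$. *)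

theory Defs
  imports "HOL-Analysis.Analysis"
begin

definition stochastic :: "('s::finite \<Rightarrow> 's \<Rightarrow> real) \<Rightarrow> bool" where
  "stochastic P \<longleftrightarrow> (\<forall>s t. 0 \<le> P s t) \<and> (\<forall>s. (\<Sum>t\<in>UNIV. P s t) = 1)"

definition reach :: "('s \<Rightarrow> 's \<Rightarrow> real) \<Rightarrow> 's \<Rightarrow> 's \<Rightarrow> bool" where
  "reach P x y \<longleftrightarrow> (x, y) \<in> {(a, b). 0 < P a b}\<^sup>*"

text \<open>A state is recurrent iff every state reachable from it can reach it back
  (finite state space).\<close>
definition recurrent :: "('s \<Rightarrow> 's \<Rightarrow> real) \<Rightarrow> 's \<Rightarrow> bool" where
  "recurrent P x \<longleftrightarrow> (\<forall>y. reach P x y \<longrightarrow> reach P y x)"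

definition recurrent_classes :: "('s \<Rightarrow> 's \<Rightarrow> real) \<Rightarrow> 's set set" where
  "recurrent_classes P = {{y. reach P x y \<and> reach P y x} | x. recurrent P x}"

definition unichain_chain :: "('s \<Rightarrow> 's \<Rightarrow> real) \<Rightarrow> bool" where
  "unichain_chain P \<longleftrightarrow> card (recurrent_classes P) = 1"

text \<open>Transition matrix and reward of a policy pol (set of states where action 1 is played)
  in the MDP M(lambda).\<close>
definition pol_P :: "('s \<Rightarrow> 's \<Rightarrow> real) \<Rightarrow> ('s \<Rightarrow> 's \<Rightarrow> real) \<Rightarrow> 's set \<Rightarrow> 's \<Rightarrow> 's \<Rightarrow> real" where
  "pol_P P0 P1 pol s = (if s \<in> pol then P1 s else P0 s)"

definition pol_r :: "('s \<Rightarrow> real) \<Rightarrow> ('s \<Rightarrow> real) \<Rightarrow> 's set \<Rightarrow> real \<Rightarrow> 's \<Rightarrow> real" where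
  "pol_r r0 r1 pol lam s = (if s \<in> pol then r1 s - lam else r0 s)"

definition unichain_mdp :: "('s::finite \<Rightarrow> 's \<Rightarrow> real) \<Rightarrow> ('s \<Rightarrow> 's \<Rightarrow> real) \<Rightarrow> bool" where
  "unichain_mdp P0 P1 \<longleftrightarrow> (\<forall>pol. unichain_chain (pol_P P0 P1 pol))"

definition poisson_sol :: "('s::finite \<Rightarrow> 's \<Rightarrow> real) \<Rightarrow> ('s \<Rightarrow> real) \<Rightarrow> real \<Rightarrow> ('s \<Rightarrow> real) \<Rightarrow> bool" where
  "poisson_sol P r g b \<longleftrightarrow> (\<forall>s. g + b s = r s + (\<Sum>t\<in>UNIV. P s t * b t))"

text \<open>A bias of policy pol in M(lambda) (chosen solution; defined up to an additive constant).\<close>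
definition bias :: "('s::finite \<Rightarrow> 's \<Rightarrow> real) \<Rightarrow> ('s \<Rightarrow> 's \<Rightarrow> real) \<Rightarrow> ('s \<Rightarrow> real) \<Rightarrow> ('s \<Rightarrow> real)
    \<Rightarrow> 's set \<Rightarrow> real \<Rightarrow> 's \<Rightarrow> real" where
  "bias P0 P1 r0 r1 pol lam = (SOME b. \<exists>g. poisson_sol (pol_P P0 P1 pol) (pol_r r0 r1 pol lam) g b)"

definition adv :: "('s::finite \<Rightarrow> 's \<Rightarrow> real) \<Rightarrow> ('s \<Rightarrow> 's \<Rightarrow> real) \<Rightarrow> ('s \<Rightarrow> real) \<Rightarrow> ('s \<Rightarrow> real)
    \<Rightarrow> 's set \<Rightarrow> 's \<Rightarrow> real \<Rightarrow> real" where
  "adv P0 P1 r0 r1 pol s lam =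
     r1 s - lam - r0 s + (\<Sum>t\<in>UNIV. (P1 s t - P0 s t) * bias P0 P1 r0 r1 pol lam t)"

text \<open>avoid P s' n x = probability that the chain started at x has X_0,...,X_n all different
  from s', i.e. Pr(tau_{x,s'} > n) with tau = min {t >= 0. X_t = s'}.\<close>
fun avoid :: "('s::finite \<Rightarrow> 's \<Rightarrow> real) \<Rightarrow> 's \<Rightarrow> nat \<Rightarrow> 's \<Rightarrow> real" where
  "avoid P s' 0 x = (if x = s' then 0 else 1)"
| "avoid P s' (Suc n) x = (if x = s' then 0 else (\<Sum>y\<in>UNIV. P x y * avoid P s' n y))"

text \<open>Expected hitting time E[tau_{x,s'}] = sum_{n>=0} Pr(tau > n).\<close>
definition hit_time :: "('s::finite \<Rightarrow> 's \<Rightarrow> real) \<Rightarrow> 's \<Rightarrow> 's \<Rightarrow> real" where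
  "hit_time P x s' = (\<Sum>n. avoid P s' n x)"

definition diameter :: "('s::finite \<Rightarrow> 's \<Rightarrow> real) \<Rightarrow> real" where
  "diameter P = Max {hit_time P x s' | x s'. recurrent P s'}"

end

theory Submission
  imports Defs
begin

lemma stoch_pol: "stochastic P0 \<Longrightarrow> stochastic P1 \<Longrightarrow> stochastic (pol_P P0 P1 pol)"
  unfolding stochastic_def pol_P_def by auto

lemma avoid_bounds: "stochastic P \<Longrightarrow> 0 \<le> avoid P s' n x \<and> avoid P s' n x \<le> 1"
proof (induction n arbitrary: x)
  case 0 then show ?case by simp
next
  case (Suc n)
  have st: "\<And>y. 0 \<le> P x y" "(\<Sum>y\<in>UNIV. P x y) = 1" using Suc.prems unfolding stochastic_def by auto
  have "(\<Sum>y\<in>UNIV. P x y * avoid P s' n y) \<le> (\<Sum>y\<in>UNIV. P x y * 1)"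
    by (intro sum_mono mult_left_mono) (use Suc st in auto)
  moreover have "0 \<le> (\<Sum>y\<in>UNIV. P x y * avoid P s' n y)"
    by (intro sum_nonneg mult_nonneg_nonneg) (use Suc st in auto)
  ultimately show ?case using st by auto
qed

lemma avoid_at: "avoid P s' n s' = 0"
  by (cases n) auto

lemma avoid_Suc_le: "stochastic P \<Longrightarrow> avoid P s' (Suc n) x \<le> avoid P s' n x"
proof (induction n arbitrary: x)
  case 0 then show ?case using avoid_bounds[OF 0, of s' "Suc 0" x] by (cases "x = s'") (simp_all add: avoid_at del: avoid.simps(2))
next
  case (Suc n)
  have st: "\<And>y. 0 \<le> P x y" using Suc.prems unfolding stochastic_def by auto
  have "(\<Sum>y\<in>UNIV. P x y * avoid P s' (Suc n) y) \<le> (\<Sum>y\<in>UNIV. P x y * avoid P s' n y)"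
    by (intro sum_mono mult_left_mono) (use Suc st in auto)
  then show ?case by simp
qed

lemma avoid_mono: "stochastic P \<Longrightarrow> n \<le> m \<Longrightarrow> avoid P s' m x \<le> avoid P s' n x"
  using lift_Suc_antimono_le[of "\<lambda>n. avoid P s' n x"] avoid_Suc_le by blast

lemma reach_avoid:
  assumes "stochastic P" "reach P x s'"
  shows "\<exists>n. avoid P s' n x < 1"
  using assms(2) unfolding reach_def
proof (induction rule: converse_rtrancl_induct)
  case base
  then show ?case by (intro exI[of _ 0]) simp
next
  case (step x y)
  then obtain n where n: "avoid P s' n y < 1" by auto
  have py: "0 < P x y" using step by auto
  show ?case
  proof (cases "x = s'")
    case True then show ?thesis by (intro exI[of _ 0]) simp
  next
    case False
    have st: "\<And>z. 0 \<le> P x z" "(\<Sum>z\<in>UNIV. P x z) = 1" using assms(1) unfolding stochastic_def by auto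
    have "(\<Sum>z\<in>UNIV. P x z * avoid P s' n z) < (\<Sum>z\<in>UNIV. P x z * 1)"
    proof (rule sum_strict_mono_ex1)
      show "\<forall>z\<in>UNIV. P x z * avoid P s' n z \<le> P x z * 1"
        using avoid_bounds[OF assms(1)] st by (auto simp: mult_left_le)
      show "\<exists>z\<in>UNIV. P x z * avoid P s' n z < P x z * 1"
        using n py by (intro bexI[of _ y]) auto
    qed simp
    then show ?thesis using False st by (intro exI[of _ "Suc n"]) simp
  qed
qed

lemma avoid_shift:
  assumes "stochastic P" "\<forall>y. avoid P s' m y \<le> c * avoid P s' 0 y"
  shows "avoid P s' (n + m) x \<le> c * avoid P s' n x"
proof (induction n arbitrary: x)
  case 0 then show ?case using assms(2) by simp
next
  case (Suc n)
  have st: "\<And>y. 0 \<le> P x y" using assms(1) unfolding stochastic_def by auto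
  have "(\<Sum>y\<in>UNIV. P x y * avoid P s' (n + m) y) \<le> (\<Sum>y\<in>UNIV. P x y * (c * avoid P s' n y))"
    by (intro sum_mono mult_left_mono) (use Suc st in auto)
  also have "\<dots> = c * (\<Sum>y\<in>UNIV. P x y * avoid P s' n y)"
    by (simp add: sum_distrib_left algebra_simps)
  finally show ?case by simp
qed

lemma summable_avoid:
  fixes P :: "'s::finite \<Rightarrow> 's \<Rightarrow> real"
  assumes st: "stochastic P" and r: "\<forall>x. reach P x s'"
  shows "summable (\<lambda>n. avoid P s' n x)"
proof -
  have "\<forall>x. \<exists>n. avoid P s' n x < 1" using reach_avoid[OF st] r by blast
  then obtain nx where nx: "\<And>x. avoid P s' (nx x) x < 1" by metis
  define K where "K = Suc (Max (range nx))"
  have K: "avoid P s' K y < 1" for y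
  proof -
    have "nx y \<le> K" unfolding K_def by (simp add: le_SucI)
    then show ?thesis using avoid_mono[OF st, of "nx y" K s' y] nx[of y] by linarith
  qed
  define \<rho> where "\<rho> = max (1/2) (Max (range (\<lambda>y. avoid P s' K y)))"
  have "Max (range (\<lambda>y. avoid P s' K y)) \<in> range (\<lambda>y. avoid P s' K y)" by (intro Max_in) auto
  then obtain y0 where y0: "Max (range (\<lambda>y. avoid P s' K y)) = avoid P s' K y0" by blast
  have \<rho>1: "\<rho> < 1" unfolding \<rho>_def using K[of y0] y0 by simp
  have \<rho>0: "0 < \<rho>" unfolding \<rho>_def by auto
  have \<rho>ge: "avoid P s' K y \<le> \<rho>" for y unfolding \<rho>_def by (intro max.coboundedI2 Max_ge) auto
  have shiftK: "\<forall>y. avoid P s' K y \<le> \<rho> * avoid P s' 0 y"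
    using \<rho>ge avoid_at[of P s' K] by auto
  define \<theta> where "\<theta> = root K \<rho>"
  have K0: "0 < K" unfolding K_def by simp
  have \<theta>K: "\<theta> ^ K = \<rho>" unfolding \<theta>_def using K0 \<rho>0 by simp
  have \<theta>0: "0 < \<theta>" unfolding \<theta>_def using K0 \<rho>0 by simp
  have \<theta>1: "\<theta> < 1" unfolding \<theta>_def using K0 \<rho>1 \<rho>0 by (simp add: real_root_lt_1_iff)
  have bound: "avoid P s' n y \<le> \<theta> ^ n / \<rho>" for n y
  proof (induction n arbitrary: y rule: less_induct)
    case (less n)
    show ?case
    proof (cases "n < K")
      case True
      have "\<rho> \<le> \<theta> ^ n" using power_decreasing[of n K \<theta>] True \<theta>0 \<theta>1 \<theta>K by auto
      then have "1 \<le> \<theta> ^ n / \<rho>" using \<rho>0 by simp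
      then show ?thesis using avoid_bounds[OF st, of s' n y] by linarith
    next
      case False
      then have n: "n = (n - K) + K" by simp
      have "avoid P s' n y \<le> \<rho> * avoid P s' (n - K) y"
        using avoid_shift[OF st shiftK, of "n - K" y] n by simp
      also have "\<dots> \<le> \<rho> * (\<theta> ^ (n - K) / \<rho>)"
        using less.IH[of "n - K" y] K0 False \<rho>0 by (intro mult_left_mono) auto
      also have "\<dots> = \<theta> ^ n / \<rho>"
      proof -
        have "\<theta> ^ n = \<theta> ^ (n - K) * \<rho>" using n \<theta>K by (metis power_add)
        then show ?thesis using \<rho>0 by simp
      qed
      finally show ?thesis .
    qed
  qed
  show ?thesis
  proof (rule summable_comparison_test)
    show "\<exists>N. \<forall>n\<ge>N. norm (avoid P s' n x) \<le> \<theta> ^ n / \<rho>"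
      using bound avoid_bounds[OF st] by auto
    show "summable (\<lambda>n. \<theta> ^ n / \<rho>)"
      using \<theta>0 \<theta>1 by (intro summable_divide summable_geometric) simp
  qed
qed

lemma hit_bound:
  fixes P :: "'s::finite \<Rightarrow> 's \<Rightarrow> real"
  assumes st: "stochastic P" and r: "\<forall>x. reach P x s'"
    and w0: "w s' = 0" and weq: "\<And>x. x \<noteq> s' \<Longrightarrow> w x = f x + (\<Sum>y\<in>UNIV. P x y * w y)"
    and f1: "\<And>x. \<bar>f x\<bar> \<le> 1"
  shows "\<bar>w x\<bar> \<le> hit_time P x s'"
proof -
  define M where "M = Max (range (\<lambda>x. \<bar>w x\<bar>))"
  have M: "\<bar>w y\<bar> \<le> M" for y unfolding M_def by (intro Max_ge) auto
  have M0: "0 \<le> M" using M[of s'] by simp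
  have stx: "\<And>x y. 0 \<le> P x y" "\<And>x. (\<Sum>y\<in>UNIV. P x y) = 1" using st unfolding stochastic_def by auto
  have claim: "\<bar>w y\<bar> \<le> (\<Sum>k<n. avoid P s' k y) + M * avoid P s' n y" for n y
  proof (induction n arbitrary: y)
    case 0 then show ?case using M w0 by (cases "y = s'") auto
  next
    case (Suc n)
    show ?case
    proof (cases "y = s'")
      case True
      show ?thesis using True w0 by (simp add: avoid_at del: avoid.simps)
    next
      case False
      have "\<bar>w y\<bar> \<le> \<bar>f y\<bar> + \<bar>\<Sum>z\<in>UNIV. P y z * w z\<bar>" using weq[OF False] by simp
      also have "\<dots> \<le> 1 + (\<Sum>z\<in>UNIV. P y z * \<bar>w z\<bar>)"
      proof -
        have "\<bar>\<Sum>z\<in>UNIV. P y z * w z\<bar> \<le> (\<Sum>z\<in>UNIV. \<bar>P y z * w z\<bar>)" by (rule sum_abs)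
        also have "\<dots> = (\<Sum>z\<in>UNIV. P y z * \<bar>w z\<bar>)" using stx by (simp add: abs_mult)
        finally show ?thesis using f1[of y] by simp
      qed
      also have "\<dots> \<le> 1 + (\<Sum>z\<in>UNIV. P y z * ((\<Sum>k<n. avoid P s' k z) + M * avoid P s' n z))"
        using Suc.IH stx by (intro add_left_mono sum_mono mult_left_mono) auto
      also have "\<dots> = 1 + (\<Sum>k<n. (\<Sum>z\<in>UNIV. P y z * avoid P s' k z)) + M * (\<Sum>z\<in>UNIV. P y z * avoid P s' n z)"
      proof -
        have "(\<Sum>z\<in>UNIV. P y z * ((\<Sum>k<n. avoid P s' k z) + M * avoid P s' n z))
           = (\<Sum>z\<in>UNIV. \<Sum>k<n. P y z * avoid P s' k z) + M * (\<Sum>z\<in>UNIV. P y z * avoid P s' n z)"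
          by (simp add: distrib_left sum.distrib sum_distrib_left mult.left_commute)
        moreover have "(\<Sum>z\<in>UNIV. \<Sum>k<n. P y z * avoid P s' k z) = (\<Sum>k<n. \<Sum>z\<in>UNIV. P y z * avoid P s' k z)"
          by (rule sum.swap)
        ultimately show ?thesis by simp
      qed
      also have "\<dots> = 1 + (\<Sum>k<n. avoid P s' (Suc k) y) + M * avoid P s' (Suc n) y"
        using False by simp
      also have "\<dots> = (\<Sum>k<Suc n. avoid P s' k y) + M * avoid P s' (Suc n) y"
        using False by (simp only: sum.lessThan_Suc_shift) simp
      finally show ?thesis .
    qed
  qed
  have sm: "summable (\<lambda>n. avoid P s' n x)" by (rule summable_avoid[OF st r])
  have lim: "(\<lambda>n. (\<Sum>k<n. avoid P s' k x) + M * avoid P s' n x) \<longlonglongrightarrow> hit_time P x s' + M * 0"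
    unfolding hit_time_def
    by (intro tendsto_add tendsto_mult summable_LIMSEQ sm summable_LIMSEQ_zero tendsto_const)
  show ?thesis using LIMSEQ_le_const[OF lim] claim by auto
qed

lemma exists_recurrent:
  fixes P :: "'s::finite \<Rightarrow> 's \<Rightarrow> real"
  shows "\<exists>y. reach P x y \<and> recurrent P y"
proof -
  have "reach P x x" unfolding reach_def by simp
  from ex_has_least_nat[of "\<lambda>y. reach P x y", OF this, of "\<lambda>y. card {z. reach P y z}"]
  obtain y where y: "reach P x y" and ymin: "\<And>z. reach P x z \<Longrightarrow> card {t. reach P y t} \<le> card {t. reach P z t}"
    by blast
  have "recurrent P y" unfolding recurrent_def
  proof (intro allI impI)
    fix z assume yz: "reach P y z"
    have trans: "reach P a b \<Longrightarrow> reach P b c \<Longrightarrow> reach P a c" for a b c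
      unfolding reach_def by (rule rtrancl_trans)
    have sub: "{t. reach P z t} \<subseteq> {t. reach P y t}"
    proof
      fix t assume "t \<in> {t. reach P z t}"
      then show "t \<in> {t. reach P y t}" using trans[OF yz, of t] by simp
    qed
    have "reach P x z" using trans[OF y yz] .
    then have "card {t. reach P y t} \<le> card {t. reach P z t}" by (rule ymin)
    moreover have "card {t. reach P z t} \<le> card {t. reach P y t}" using sub by (intro card_mono) auto
    ultimately have "{t. reach P z t} = {t. reach P y t}" using sub by (intro card_subset_eq) auto
    moreover have "y \<in> {t. reach P y t}" unfolding reach_def by simp
    ultimately have "y \<in> {t. reach P z t}" by simp
    then show "reach P z y" by simp
  qed
  then show ?thesis using y by blast
qed

lemma unichain_reach:
  fixes P :: "'s::finite \<Rightarrow> 's \<Rightarrow> real"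
  assumes u: "unichain_chain P" and rs: "recurrent P s'"
  shows "reach P x s'"
proof -
  obtain y where y: "reach P x y" "recurrent P y" using exists_recurrent by blast
  obtain C where C: "recurrent_classes P = {C}" using u unfolding unichain_chain_def
    by (metis card_1_singletonE)
  have "{t. reach P y t \<and> reach P t y} \<in> recurrent_classes P"
    using y unfolding recurrent_classes_def by blast
  moreover have "{t. reach P s' t \<and> reach P t s'} \<in> recurrent_classes P"
    using rs unfolding recurrent_classes_def by blast
  ultimately have eq: "{t. reach P y t \<and> reach P t y} = {t. reach P s' t \<and> reach P t s'}" using C by simp
  have "s' \<in> {t. reach P s' t \<and> reach P t s'}" unfolding reach_def by simp
  then have "s' \<in> {t. reach P y t \<and> reach P t y}" using eq by simp
  then have "reach P y s'" by simp
  then show ?thesis using y(1) unfolding reach_def by (rule rtrancl_trans[rotated])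
qed

lemma max_prop:
  fixes P :: "'s::finite \<Rightarrow> 's \<Rightarrow> real"
  assumes st: "stochastic P" and h: "\<And>x. d x = (\<Sum>y\<in>UNIV. P x y * d y)"
    and mx: "\<And>z. d z \<le> d x" and r: "reach P x y"
  shows "d y = d x"
  using r unfolding reach_def
proof (induction rule: rtrancl_induct)
  case base then show ?case by simp
next
  case (step y z)
  have stx: "\<And>t. 0 \<le> P y t" "(\<Sum>t\<in>UNIV. P y t) = 1" using st unfolding stochastic_def by auto
  show ?case
  proof (rule ccontr)
    assume "d z \<noteq> d x"
    then have lt: "d z < d x" using mx[of z] by simp
    have "(\<Sum>t\<in>UNIV. P y t * d t) < (\<Sum>t\<in>UNIV. P y t * d x)"
    proof (rule sum_strict_mono_ex1)
      show "\<forall>t\<in>UNIV. P y t * d t \<le> P y t * d x" using stx mx by (auto intro: mult_left_mono)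
      show "\<exists>t\<in>UNIV. P y t * d t < P y t * d x" using step lt by (intro bexI[of _ z]) auto
    qed simp
    also have "\<dots> = d x" using stx by (simp add: sum_distrib_right[symmetric])
    finally show False using h[of y] step by simp
  qed
qed

lemma ex_max: fixes d :: "'s::finite \<Rightarrow> real" shows "\<exists>x. \<forall>z. d z \<le> d x"
proof -
  have "Max (range d) \<in> range d" by (intro Max_in) auto
  then obtain x where "d x = Max (range d)" by (metis imageE)
  show ?thesis
  proof (intro exI allI)
    fix z show "d z \<le> d x" unfolding \<open>d x = Max (range d)\<close> by (rule Max_ge) auto
  qed
qed

lemma poisson_unique:
  fixes P :: "'s::finite \<Rightarrow> 's \<Rightarrow> real"
  assumes st: "stochastic P" and r: "\<forall>x. reach P x s'"
    and p1: "poisson_sol P rr g1 b1" and p2: "poisson_sol P rr g2 b2"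
  shows "g1 = g2 \<and> (\<forall>x. b1 x = b2 x + (b1 s' - b2 s'))"
proof -
  define d where "d x = b1 x - b2 x" for x
  define \<delta> where "\<delta> = g1 - g2"
  have stx: "\<And>x y. 0 \<le> P x y" "\<And>x. (\<Sum>y\<in>UNIV. P x y) = 1" using st unfolding stochastic_def by auto
  have de: "\<delta> + d x = (\<Sum>y\<in>UNIV. P x y * d y)" for x
  proof -
    have q1: "g1 + b1 x = rr x + (\<Sum>y\<in>UNIV. P x y * b1 y)" using p1 unfolding poisson_sol_def by blast
    have q2: "g2 + b2 x = rr x + (\<Sum>y\<in>UNIV. P x y * b2 y)" using p2 unfolding poisson_sol_def by blast
    have q3: "(\<Sum>y\<in>UNIV. P x y * d y) = (\<Sum>y\<in>UNIV. P x y * b1 y) - (\<Sum>y\<in>UNIV. P x y * b2 y)"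
      unfolding d_def sum_subtractf[symmetric] by (rule sum.cong) (simp_all add: right_diff_distrib)
    have q4: "d x = b1 x - b2 x" unfolding d_def by (rule refl)
    show ?thesis using q1 q2 q3 q4 unfolding \<delta>_def by linarith
  qed
  obtain x1 where x1: "\<And>z. d z \<le> d x1" using ex_max by blast
  obtain x2 where x2: "\<And>z. - d z \<le> - d x2" using ex_max[of "\<lambda>x. - d x"] by blast
  have "(\<Sum>y\<in>UNIV. P x1 y * d y) \<le> (\<Sum>y\<in>UNIV. P x1 y * d x1)"
    using stx x1 by (intro sum_mono mult_left_mono) auto
  moreover have "(\<Sum>y\<in>UNIV. P x1 y * d x1) = d x1" using stx(2)[of x1] by (simp add: sum_distrib_right[symmetric])
  ultimately have a: "\<delta> \<le> 0" using de[of x1] by linarith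
  have "(\<Sum>y\<in>UNIV. P x2 y * d x2) \<le> (\<Sum>y\<in>UNIV. P x2 y * d y)"
    using stx x2 by (intro sum_mono mult_left_mono) auto
  moreover have "(\<Sum>y\<in>UNIV. P x2 y * d x2) = d x2" using stx(2)[of x2] by (simp add: sum_distrib_right[symmetric])
  ultimately have b: "\<delta> \<ge> 0" using de[of x2] by linarith
  have d0: "\<delta> = 0" using a b by simp
  have h: "d x = (\<Sum>y\<in>UNIV. P x y * d y)" for x using de[of x] d0 by linarith
  have h': "- d x = (\<Sum>y\<in>UNIV. P x y * - d y)" for x
  proof -
    have "(\<Sum>y\<in>UNIV. P x y * - d y) = - (\<Sum>y\<in>UNIV. P x y * d y)"
      unfolding sum_negf[symmetric] by (rule sum.cong) simp_all
    then show ?thesis using h[of x] by linarith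
  qed
  have e1: "d s' = d x1" using max_prop[OF st h x1 r[rule_format, of x1]] .
  have e2: "- d s' = - d x2" using max_prop[OF st h' x2 r[rule_format, of x2]] .
  have dd: "d x = d s'" for x using x1[of x] x2[of x] e1 e2 by linarith
  have bx: "b1 x = b2 x + (b1 s' - b2 s')" for x using dd[of x] unfolding d_def by linarith
  have "g1 = g2" using d0 unfolding \<delta>_def by linarith
  then show ?thesis using bx by blast
qed

lemma avg_le:
  fixes q h :: "'s::finite \<Rightarrow> real"
  assumes "\<And>t. 0 \<le> q t" "sum q UNIV = 1" "\<And>t. h t \<le> M"
  shows "(\<Sum>t\<in>UNIV. q t * h t) \<le> M"
proof -
  have "(\<Sum>t\<in>UNIV. q t * h t) \<le> (\<Sum>t\<in>UNIV. q t * M)"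
    using assms by (intro sum_mono mult_left_mono) auto
  also have "\<dots> = M" using assms(2) by (simp add: sum_distrib_right[symmetric])
  finally show ?thesis .
qed

lemma avg_ge:
  fixes q h :: "'s::finite \<Rightarrow> real"
  assumes "\<And>t. 0 \<le> q t" "sum q UNIV = 1" "\<And>t. m \<le> h t"
  shows "m \<le> (\<Sum>t\<in>UNIV. q t * h t)"
proof -
  have "(\<Sum>t\<in>UNIV. q t * m) \<le> (\<Sum>t\<in>UNIV. q t * h t)"
    using assms by (intro sum_mono mult_left_mono) auto
  moreover have "(\<Sum>t\<in>UNIV. q t * m) = m" using assms(2) by (simp add: sum_distrib_right[symmetric])
  ultimately show ?thesis by simp
qed

lemma poisson_exists:
  fixes P :: "'s::finite \<Rightarrow> 's \<Rightarrow> real"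
  assumes st: "stochastic P" and r: "\<forall>x. reach P x s'"
  shows "\<exists>g b. poisson_sol P rr g b"
proof -
  define bb where "bb v y = (if y = s' then 0 else v $ y)" for v :: "real^'s" and y
  define L where "L v = (\<chi> i. v$s' + bb v i - (\<Sum>y\<in>UNIV. P i y * bb v y))" for v :: "real^'s"
  have bb_add: "bb (v + w) y = bb v y + bb w y" for v w y unfolding bb_def by simp
  have bb_scale: "bb (c *\<^sub>R v) y = c * bb v y" for c v y unfolding bb_def by simp
  have sol: "poisson_sol P (\<lambda>i. L v $ i) (v$s') (bb v)" for v unfolding poisson_sol_def L_def by simp
  have lin: "linear L"
  proof (rule linearI)
    show "L (v + w) = L v + L w" for v w
      unfolding L_def vec_eq_iff by (simp add: bb_add distrib_left sum.distrib algebra_simps)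
    show "L (c *\<^sub>R v) = c *\<^sub>R L v" for c v
      unfolding L_def vec_eq_iff by (simp add: bb_scale sum_distrib_left algebra_simps)
  qed
  have inj: "inj L"
  proof (rule injI)
    fix v w assume "L v = L w"
    then have "poisson_sol P (\<lambda>i. L v $ i) (w$s') (bb w)" using sol[of w] by simp
    from poisson_unique[OF st r sol[of v] this]
    have e: "v$s' = w$s'" "\<And>x. bb v x = bb w x + (bb v s' - bb w s')" by blast+
    have z: "bb v s' = 0" "bb w s' = 0" unfolding bb_def by simp_all
    show "v = w" unfolding vec_eq_iff
    proof
      fix i
      have bi: "bb v i = bb w i" using e(2)[of i] z by linarith
      show "v $ i = w $ i"
      proof (cases "i = s'")
        case True then show ?thesis using e(1) by simp
      next
        case False then show ?thesis using bi unfolding bb_def by simp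
      qed
    qed
  qed
  have "surj L" by (rule eucl.linear_inj_imp_surj[OF lin inj])
  then obtain v where v: "(\<chi> i. rr i) = L v" by (metis surjD)
  have "(\<lambda>i. L v $ i) = rr" using v[symmetric] by (simp add: vec_eq_iff fun_eq_iff)
  then show ?thesis using sol[of v] by metis
qed

theorem mainTheorem8:
  fixes P0 P1 :: "'s::finite \<Rightarrow> 's \<Rightarrow> real" and r0 r1 :: "'s \<Rightarrow> real"
    and pol :: "'s set" and s :: 's
  assumes "stochastic P0" and "stochastic P1"
    and "unichain_mdp P0 P1"
  shows "\<exists>a c. (\<forall>lam. adv P0 P1 r0 r1 pol s lam = a + c * lam)
              \<and> \<bar>c\<bar> \<le> 2 * diameter (pol_P P0 P1 pol) + 1"
proof -
  define P where "P = pol_P P0 P1 pol"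
  have st: "stochastic P" unfolding P_def by (rule stoch_pol[OF assms(1,2)])
  have stx: "\<And>x y. 0 \<le> P x y" "\<And>x. (\<Sum>y\<in>UNIV. P x y) = 1" using st unfolding stochastic_def by auto
  have st0: "\<And>y. 0 \<le> P0 s y" "(\<Sum>y\<in>UNIV. P0 s y) = 1" using assms(1) unfolding stochastic_def by auto
  have st1: "\<And>y. 0 \<le> P1 s y" "(\<Sum>y\<in>UNIV. P1 s y) = 1" using assms(2) unfolding stochastic_def by auto
  have uc: "unichain_chain P" using assms(3) unfolding unichain_mdp_def P_def by blast
  obtain s' where rs: "recurrent P s'" using exists_recurrent by blast
  have r: "\<forall>x. reach P x s'" using unichain_reach[OF uc rs] by blast
  define e where "e x = (if x \<in> pol then -1 else 0::real)" for x
  obtain g0 b0 where p0: "poisson_sol P (pol_r r0 r1 pol 0) g0 b0" using poisson_exists[OF st r] by blast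
  obtain g1 h where p1: "poisson_sol P e g1 h" using poisson_exists[OF st r] by blast
  have pl: "poisson_sol P (pol_r r0 r1 pol lam) (g0 + lam * g1) (\<lambda>x. b0 x + lam * h x)" for lam
    unfolding poisson_sol_def
  proof
    fix x
    have q0: "g0 + b0 x = pol_r r0 r1 pol 0 x + (\<Sum>y\<in>UNIV. P x y * b0 y)" using p0 unfolding poisson_sol_def by blast
    have q1: "g1 + h x = e x + (\<Sum>y\<in>UNIV. P x y * h y)" using p1 unfolding poisson_sol_def by blast
    have q2: "pol_r r0 r1 pol lam x = pol_r r0 r1 pol 0 x + lam * e x" unfolding pol_r_def e_def by simp
    have q3: "(\<Sum>y\<in>UNIV. P x y * (b0 y + lam * h y)) = (\<Sum>y\<in>UNIV. P x y * b0 y) + lam * (\<Sum>y\<in>UNIV. P x y * h y)"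
      unfolding sum_distrib_left sum.distrib[symmetric] by (rule sum.cong) (simp_all add: algebra_simps)
    have "lam * (g1 + h x) = lam * (e x + (\<Sum>y\<in>UNIV. P x y * h y))" using q1 by simp
    then have q4: "lam * g1 + lam * h x = lam * e x + lam * (\<Sum>y\<in>UNIV. P x y * h y)" by (simp only: distrib_left)
    show "g0 + lam * g1 + (b0 x + lam * h x) = pol_r r0 r1 pol lam x + (\<Sum>y\<in>UNIV. P x y * (b0 y + lam * h y))"
      using q0 q2 q3 q4 by linarith
  qed
  define B where "B lam = bias P0 P1 r0 r1 pol lam" for lam
  have bias_eq: "B lam x = b0 x + lam * h x + (B lam s' - (b0 s' + lam * h s'))" for lam x
  proof -
    have ex: "\<exists>b. \<exists>g. poisson_sol P (pol_r r0 r1 pol lam) g b" using pl by blast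
    have "\<exists>g. poisson_sol P (pol_r r0 r1 pol lam) g (B lam)"
      unfolding B_def bias_def P_def[symmetric] by (rule someI_ex[OF ex])
    then obtain g where "poisson_sol P (pol_r r0 r1 pol lam) g (B lam)" by blast
    from poisson_unique[OF st r this pl[of lam]] have "\<forall>x. B lam x = b0 x + lam * h x + (B lam s' - (b0 s' + lam * h s'))" by (rule conjunct2)
    then show ?thesis by (rule spec)
  qed
  define D where "D t = P1 s t - P0 s t" for t
  have D0: "(\<Sum>t\<in>UNIV. D t) = 0" unfolding D_def sum_subtractf using st0 st1 by simp
  define a where "a = r1 s - r0 s + (\<Sum>t\<in>UNIV. D t * b0 t)"
  define c where "c = (\<Sum>t\<in>UNIV. D t * h t) - 1"
  have affine: "adv P0 P1 r0 r1 pol s lam = a + c * lam" for lam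
  proof -
    define k where "k = B lam s' - (b0 s' + lam * h s')"
    have bl: "B lam t = b0 t + lam * h t + k" for t using bias_eq[of lam t] unfolding k_def by linarith
    have "(\<Sum>t\<in>UNIV. D t * B lam t) = (\<Sum>t\<in>UNIV. D t * b0 t + lam * (D t * h t) + k * D t)"
      by (rule sum.cong) (simp_all add: bl algebra_simps)
    also have "\<dots> = (\<Sum>t\<in>UNIV. D t * b0 t) + lam * (\<Sum>t\<in>UNIV. D t * h t) + k * (\<Sum>t\<in>UNIV. D t)"
      by (simp add: sum.distrib sum_distrib_left)
    finally have "(\<Sum>t\<in>UNIV. D t * B lam t) = (\<Sum>t\<in>UNIV. D t * b0 t) + lam * (\<Sum>t\<in>UNIV. D t * h t)"
      using D0 by simp
    then show ?thesis unfolding adv_def a_def c_def B_def[symmetric] D_def[symmetric]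
      by (simp add: algebra_simps)
  qed
  obtain xM where xM: "\<And>z. h z \<le> h xM" using ex_max by blast
  obtain xm where xm': "\<And>z. - h z \<le> - h xm" using ex_max[of "\<lambda>x. - h x"] by blast
  have xm: "\<And>z. h xm \<le> h z" using xm' by (metis neg_le_iff_le)
  have span: "\<bar>\<Sum>t\<in>UNIV. D t * h t\<bar> \<le> h xM - h xm"
  proof -
    have "(\<Sum>t\<in>UNIV. D t * h t) = (\<Sum>t\<in>UNIV. P1 s t * h t) - (\<Sum>t\<in>UNIV. P0 s t * h t)"
      unfolding D_def sum_subtractf[symmetric] by (rule sum.cong) (simp_all add: left_diff_distrib)
    moreover have "(\<Sum>t\<in>UNIV. P1 s t * h t) \<le> h xM" by (rule avg_le[OF st1 xM])
    moreover have "h xm \<le> (\<Sum>t\<in>UNIV. P1 s t * h t)" by (rule avg_ge[OF st1 xm])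
    moreover have "(\<Sum>t\<in>UNIV. P0 s t * h t) \<le> h xM" by (rule avg_le[OF st0 xM])
    moreover have "h xm \<le> (\<Sum>t\<in>UNIV. P0 s t * h t)" by (rule avg_ge[OF st0 xm])
    ultimately show ?thesis by linarith
  qed
  have q1: "g1 + h x = e x + (\<Sum>y\<in>UNIV. P x y * h y)" for x using p1 unfolding poisson_sol_def by blast
  have g1le: "g1 \<le> 0"
  proof -
    have "(\<Sum>y\<in>UNIV. P xM y * h y) \<le> h xM" by (rule avg_le[OF stx(1) stx(2) xM])
    moreover have "e xM \<le> 0" unfolding e_def by simp
    ultimately show ?thesis using q1[of xM] by linarith
  qed
  have g1ge: "-1 \<le> g1"
  proof -
    have "h xm \<le> (\<Sum>y\<in>UNIV. P xm y * h y)" by (rule avg_ge[OF stx(1) stx(2) xm])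
    moreover have "-1 \<le> e xm" unfolding e_def by simp
    ultimately show ?thesis using q1[of xm] by linarith
  qed
  define w where "w x = h x - h s'" for x
  define f where "f x = e x - g1" for x
  have f1: "\<bar>f x\<bar> \<le> 1" for x using g1le g1ge unfolding f_def e_def by auto
  have w0: "w s' = 0" unfolding w_def by simp
  have weq: "w x = f x + (\<Sum>y\<in>UNIV. P x y * w y)" if "x \<noteq> s'" for x
  proof -
    have "(\<Sum>y\<in>UNIV. P x y * w y) = (\<Sum>y\<in>UNIV. P x y * h y) - (\<Sum>y\<in>UNIV. P x y * h s')"
      unfolding w_def sum_subtractf[symmetric] by (rule sum.cong) (simp_all add: right_diff_distrib)
    moreover have "(\<Sum>y\<in>UNIV. P x y * h s') = h s'" using stx(2)[of x] by (simp add: sum_distrib_right[symmetric])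
    ultimately show ?thesis using q1[of x] unfolding w_def f_def by linarith
  qed
  have hb: "\<bar>w x\<bar> \<le> hit_time P x s'" for x by (rule hit_bound[OF st r w0 weq f1])
  have fin: "finite {hit_time P x s' | x s'. recurrent P s'}"
  proof (rule finite_subset)
    show "{hit_time P x s' | x s'. recurrent P s'} \<subseteq> (\<lambda>(x, y). hit_time P x y) ` UNIV" by auto
  qed simp
  have hd: "hit_time P x s' \<le> diameter P" for x
    unfolding diameter_def by (rule Max_ge[OF fin]) (use rs in blast)
  have "h xM - h xm = w xM - w xm" unfolding w_def by simp
  also have "\<dots> \<le> \<bar>w xM\<bar> + \<bar>w xm\<bar>" by simp
  also have "\<dots> \<le> 2 * diameter P" using hb[of xM] hb[of xm] hd[of xM] hd[of xm] by linarith
  finally have "\<bar>c\<bar> \<le> 2 * diameter P + 1" using span unfolding c_def by linarith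
  then show ?thesis using affine unfolding P_def by blast
qed

end
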